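(* Under Rayleigh fading, for every target rate $r>0$, $P_{\rm r}>0$ and $\mathcal C_x\in[0,1)$, \[ \mathcal P_{\rm E-E}(P_{\rm r},\mathcal C_x)\le 1-\frac{\exp\!\left(-\left(\frac{\Psi_r(\mathcal C_x)}{P_{\rm r}\pi_{\rm rd}(1-\mathcal C_x^2)}+\frac{P_{\rm r}\pi_{\rm rr}+1}{P_{\rm s}\pi_{\rm sr}}\Psi_r(\alpha\mathcal C_x)\right)\right)}{P_{\rm s}\pi_{\rm sd}\frac{\Psi_r(\mathcal C_x)}{P_{\rm r}\pi_{\rm rd}(1-\mathcal C_x^2)}+1}=:\mathcal P^{\rm UB}_{\rm E-E,RF}(P_{\rm r},\mathcal C_x), \qquad\alpha=\frac{P_{\rm r}\pi_{\rm rr}}{P_{\rm r}\pi_{\rm rr}+1}. \]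
   Context: Let $P_{\rm s}>0$, $P_{\rm r}>0$ be the source and relay transmit powers. Rayleigh fading: $g_{\rm sr},g_{\rm rr},g_{\rm rd},g_{\rm sd}$ are mutually independent exponential random variables with means $\pi_{\rm sr},\pi_{\rm rr},\pi_{\rm rd},\pi_{\rm sd}>0$. For $\mathcal C_x\in[0,1)$ define $R_{\rm sr}(P_{\rm r},\mathcal C_x)=\tfrac12\log_2\frac{(P_{\rm s}g_{\rm sr}+P_{\rm r}g_{\rm rr}+1)^2-(P_{\rm r}g_{\rm rr}\mathcal C_x)^2}{(P_{\rm r}g_{\rm rr}+1)^2-(P_{\rm r}g_{\rm rr}\mathcal C_x)^2}$ and $R_{\rm rd}(P_{\rm r},\mathcal C_x)=\tfrac12\log_2\frac{(P_{\rm r}g_{\rm rd}+P_{\rm s}g_{\rm sd}+1)^2-(P_{\rm r}g_{\rm rd}\mathcal C_x)^2}{(P_{\rm s}g_{\rm sd}+1)^2}$. For a target rate $r>0$ put $\gamma=2^{2r}-1$ and $\Psi_r(x)=\sqrt{1+\gamma(1-x^2)}-1$. The end-to-end outage probability is $\mathcal P_{\rm E-E}=\mathbb P\{\min(R_{\rm sr},R_{\rm rd})<r\}$. *)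

theory Defs
  imports "HOL-Probability.Probability"
begin

text \<open>Achievable rates (Cx is the correlation coefficient).\<close>
definition R_sr :: "real \<Rightarrow> real \<Rightarrow> real \<Rightarrow> real \<Rightarrow> real \<Rightarrow> real" where
  "R_sr Ps Pr Cx gsr grr =
     1/2 * log 2 (((Ps * gsr + Pr * grr + 1)^2 - (Pr * grr * Cx)^2) /
                  ((Pr * grr + 1)^2 - (Pr * grr * Cx)^2))"

definition R_rd :: "real \<Rightarrow> real \<Rightarrow> real \<Rightarrow> real \<Rightarrow> real \<Rightarrow> real" where
  "R_rd Ps Pr Cx grd gsd =
     1/2 * log 2 (((Pr * grd + Ps * gsd + 1)^2 - (Pr * grd * Cx)^2) /
                  ((Ps * gsd + 1)^2))"

definition Psi :: "real \<Rightarrow> real \<Rightarrow> real" where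
  "Psi r x = sqrt (1 + (2 powr (2 * r) - 1) * (1 - x^2)) - 1"

definition P_UB :: "real \<Rightarrow> real \<Rightarrow> real \<Rightarrow> real \<Rightarrow> real \<Rightarrow> real \<Rightarrow> real \<Rightarrow> real \<Rightarrow> real" where
  "P_UB r Ps Pr Cx \<pi>sr \<pi>rr \<pi>rd \<pi>sd =
     (let \<alpha> = Pr * \<pi>rr / (Pr * \<pi>rr + 1);
          T = Psi r Cx / (Pr * \<pi>rd * (1 - Cx^2))
      in 1 - exp (- (T + (Pr * \<pi>rr + 1) / (Ps * \<pi>sr) * Psi r (\<alpha> * Cx)))
             / (Ps * \<pi>sd * T + 1))"

end

theory Submission
  imports Defs
begin

lemma (in prob_space) group_indep:
  assumes ind: "indep_vars (\<lambda>_. borel) X I" and K1: "K1 \<subseteq> I" and K2: "K2 \<subseteq> I"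
    and dis: "K1 \<inter> K2 = {}"
  shows "indep_var (PiM K1 (\<lambda>_. borel)) (\<lambda>\<omega>. restrict (\<lambda>i. X i \<omega>) K1)
                   (PiM K2 (\<lambda>_. borel)) (\<lambda>\<omega>. restrict (\<lambda>i. X i \<omega>) K2)"
proof -
  have "indep_vars (\<lambda>j. PiM (case_bool K1 K2 j) (\<lambda>_. borel))
          (\<lambda>j \<omega>. restrict (\<lambda>i. X i \<omega>) (case_bool K1 K2 j)) UNIV"
    apply (rule indep_vars_restrict[OF ind])
    using K1 K2 apply (auto split: bool.split)
    using dis unfolding disjoint_family_on_def by (auto split: bool.split)
  moreover have "(\<lambda>j. PiM (case_bool K1 K2 j) (\<lambda>_. borel)) = case_bool (PiM K1 (\<lambda>_. borel)) (PiM K2 (\<lambda>_. borel))"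
    by (auto split: bool.split)
  moreover have "(\<lambda>j \<omega>. restrict (\<lambda>i. X i \<omega>) (case_bool K1 K2 j)) = case_bool (\<lambda>\<omega>. restrict (\<lambda>i. X i \<omega>) K1) (\<lambda>\<omega>. restrict (\<lambda>i. X i \<omega>) K2)"
    by (auto split: bool.split)
  ultimately show ?thesis unfolding indep_var_def by (metis (no_types))
qed

lemma (in prob_space) pair_indep:
  fixes X :: "'i \<Rightarrow> 'a \<Rightarrow> real"
  assumes ind: "indep_vars (\<lambda>_. borel) X I" and "i \<in> I" "j \<in> I" "i \<noteq> j"
  shows "indep_var lborel (X i) lborel (X j)"
proof -
  have "indep_var (PiM {i} (\<lambda>_. borel)) (\<lambda>\<omega>. restrict (\<lambda>i. X i \<omega>) {i})
                   (PiM {j} (\<lambda>_. borel)) (\<lambda>\<omega>. restrict (\<lambda>i. X i \<omega>) {j})"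
    using assms by (intro group_indep) auto
  then have "indep_var lborel ((\<lambda>f. f i) \<circ> (\<lambda>\<omega>. restrict (\<lambda>i. X i \<omega>) {i}))
                   lborel ((\<lambda>f. f j) \<circ> (\<lambda>\<omega>. restrict (\<lambda>i. X i \<omega>) {j}))"
    by (rule indep_var_compose) (auto simp: measurable_lborel2 intro!: measurable_component_singleton)
  moreover have "((\<lambda>f. f i) \<circ> (\<lambda>\<omega>. restrict (\<lambda>i. X i \<omega>) {i})) = X i"
     "((\<lambda>f. f j) \<circ> (\<lambda>\<omega>. restrict (\<lambda>i. X i \<omega>) {j})) = X j" by auto
  ultimately show ?thesis by simp
qed

lemma (in prob_space) prob_gt_fun:
  assumes ind: "indep_var lborel X lborel Y"
    and DX: "distributed M lborel X (exponential_density m)"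
    and DY: "distributed M lborel Y (exponential_density l)"
    and l: "0 < l" and m: "0 < m"
    and phi[measurable]: "\<phi> \<in> borel_measurable borel" and phi0: "\<And>x. 0 \<le> x \<Longrightarrow> 0 \<le> \<phi> x"
  shows "emeasure M {\<omega>\<in>space M. 0 \<le> X \<omega> \<and> \<phi> (X \<omega>) < Y \<omega>}
       = (\<integral>\<^sup>+x. ennreal (exponential_density m x * exp (- \<phi> x * l)) \<partial>lborel)"
proof -
  have J: "distributed M (lborel \<Otimes>\<^sub>M lborel) (\<lambda>\<omega>. (X \<omega>, Y \<omega>))
      (\<lambda>(x,y). ennreal (exponential_density m x) * ennreal (exponential_density l y))"
    by (rule distributed_joint_indep[OF _ _ DX DY ind]) (auto intro: lborel.sigma_finite_measure_axioms)
  define S where "S = {p \<in> space (lborel \<Otimes>\<^sub>M lborel). 0 \<le> fst p \<and> \<phi> (fst p) < snd p}"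
  have S[measurable]: "S \<in> sets (lborel \<Otimes>\<^sub>M lborel)" unfolding S_def by measurable
  have "{\<omega>\<in>space M. 0 \<le> X \<omega> \<and> \<phi> (X \<omega>) < Y \<omega>} = (\<lambda>\<omega>. (X \<omega>, Y \<omega>)) -` S \<inter> space M"
    by (auto simp: S_def space_pair_measure)
  then have "emeasure M {\<omega>\<in>space M. 0 \<le> X \<omega> \<and> \<phi> (X \<omega>) < Y \<omega>}
      = (\<integral>\<^sup>+p. (\<lambda>(x,y). ennreal (exponential_density m x) * ennreal (exponential_density l y)) p * indicator S p \<partial>(lborel \<Otimes>\<^sub>M lborel))"
    using distributed_emeasure[OF J S] by simp
  also have "\<dots> = (\<integral>\<^sup>+x. \<integral>\<^sup>+y. ennreal (exponential_density m x) * ennreal (exponential_density l y) * indicator S (x,y) \<partial>lborel \<partial>lborel)"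
    by (subst lborel.nn_integral_fst[symmetric]) (auto simp: case_prod_beta)
  also have "\<dots> = (\<integral>\<^sup>+x. ennreal (exponential_density m x * exp (- \<phi> x * l)) \<partial>lborel)"
  proof (rule nn_integral_cong)
    fix x :: real
    show "(\<integral>\<^sup>+y. ennreal (exponential_density m x) * ennreal (exponential_density l y) * indicator S (x,y) \<partial>lborel)
        = ennreal (exponential_density m x * exp (- \<phi> x * l))"
    proof (cases "0 \<le> x")
      case False
      then show ?thesis by (simp add: exponential_density_def)
    next
      case True
      have "(\<integral>\<^sup>+y. ennreal (exponential_density m x) * ennreal (exponential_density l y) * indicator S (x,y) \<partial>lborel)
          = ennreal (exponential_density m x) * (\<integral>\<^sup>+y. ennreal (exponential_density l y) * indicator {\<phi> x<..} y \<partial>lborel)"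
        using True by (subst nn_integral_cmult[symmetric]) (auto simp: S_def space_pair_measure mult.assoc intro!: nn_integral_cong split: split_indicator)
      also have "(\<integral>\<^sup>+y. ennreal (exponential_density l y) * indicator {\<phi> x<..} y \<partial>lborel) = emeasure M (Y -` {\<phi> x<..} \<inter> space M)"
        using distributed_emeasure[OF DY, of "{\<phi> x<..}"] by simp
      also have "Y -` {\<phi> x<..} \<inter> space M = {\<omega>\<in>space M. \<phi> x < Y \<omega>}" by auto
      also have "emeasure M {\<omega>\<in>space M. \<phi> x < Y \<omega>} = ennreal (exp (- \<phi> x * l))"
        using exponential_distributedD_gt[OF DY phi0[OF True] l] by (simp add: emeasure_eq_measure)
      finally show ?thesis using m by (simp add: ennreal_mult exponential_density_nonneg)
    qed
  qed
  finally show ?thesis .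
qed


lemma ed_int0: "0 < m \<Longrightarrow> (\<integral>\<^sup>+x. ennreal (exponential_density m x) \<partial>lborel) = 1"
  using nn_integral_erlang_ith_moment[of m 0 0] by simp

lemma ed_int1: "0 < m \<Longrightarrow> (\<integral>\<^sup>+x. ennreal (exponential_density m x * x) \<partial>lborel) = ennreal (1/m)"
  using nn_integral_erlang_ith_moment[of m 0 1] by simp

lemma ed_hb0: "0 < m \<Longrightarrow> has_bochner_integral lborel (exponential_density m) 1"
  by (rule has_bochner_integral_nn_integral) (auto simp: ed_int0 exponential_density_nonneg)

lemma ed_hb1: "0 < m \<Longrightarrow> has_bochner_integral lborel (\<lambda>x. exponential_density m x * x) (1/m)"
  by (rule has_bochner_integral_nn_integral[OF _ _ _ ed_int1]) (auto simp: exponential_density_def)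

lemma laplace_exp:
  assumes m: "0 < m" and T: "0 \<le> T" and P: "0 \<le> P"
  shows "(\<integral>\<^sup>+x. ennreal (exponential_density m x * exp (- (T * (P * x + 1)))) \<partial>lborel)
       = ennreal (exp (- T) * (m / (m + T * P)))"
proof -
  have pos: "0 < m + T * P" using m T P by (simp add: add_pos_nonneg)
  have "\<And>x. exponential_density m x * exp (- (T * (P * x + 1)))
     = exp (- T) * (m / (m + T * P)) * exponential_density (m + T * P) x"
  proof -
    fix x :: real
    have e: "exp (- x*m) * exp (-(T*(P*x+1))) = exp(-T) * exp(-x*(m+T*P))"
      by (simp add: mult_exp_exp algebra_simps)
    show "exponential_density m x * exp (- (T * (P * x + 1)))
     = exp (- T) * (m / (m + T * P)) * exponential_density (m + T * P) x"
      using pos e by (auto simp: exponential_density_def field_simps)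
  qed
  then have "(\<integral>\<^sup>+x. ennreal (exponential_density m x * exp (- (T * (P * x + 1)))) \<partial>lborel)
     = (\<integral>\<^sup>+x. ennreal (exp (- T) * (m / (m + T * P))) * ennreal (exponential_density (m + T * P) x) \<partial>lborel)"
    using m pos by (intro nn_integral_cong) (simp only: ennreal_mult[symmetric] exponential_density_nonneg less_imp_le divide_nonneg_pos mult_nonneg_nonneg exp_ge_zero)
  also have "\<dots> = ennreal (exp (- T) * (m / (m + T * P))) * (\<integral>\<^sup>+x. ennreal (exponential_density (m + T * P) x) \<partial>lborel)"
    by (rule nn_integral_cmult) auto
  also have "\<dots> = ennreal (exp (- T) * (m / (m + T * P)))" using ed_int0[OF pos] by simp
  finally show ?thesis .
qed

lemma tangent:
  fixes a b G g0 :: real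
  assumes "0 \<le> b" "b \<le> a" "0 < a" "0 \<le> G" "0 \<le> g0"
  shows "sqrt (a*(G+1)^2 - b*G^2) * sqrt (a*(g0+1)^2 - b*g0^2) \<le> a*(G+1)*(g0+1) - b*G*g0"
proof -
  have B: "0 \<le> a*(G+1)*(g0+1) - b*G*g0"
  proof -
    have "b*G*g0 \<le> a*(G*g0)" using assms by (simp add: mult.assoc mult_right_mono)
    also have "\<dots> \<le> a*((G+1)*(g0+1))" using assms by (intro mult_left_mono) (auto simp: algebra_simps)
    finally show ?thesis by (simp add: mult.assoc)
  qed
  have "sqrt (a*(G+1)^2 - b*G^2) * sqrt (a*(g0+1)^2 - b*g0^2) = sqrt ((a*(G+1)^2 - b*G^2) * (a*(g0+1)^2 - b*g0^2))"
    by (simp add: real_sqrt_mult)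
  also have "\<dots> \<le> sqrt ((a*(G+1)*(g0+1) - b*G*g0)^2)"
  proof (rule real_sqrt_le_mono)
    have "(a*(G+1)*(g0+1) - b*G*g0)^2 - (a*(G+1)^2 - b*G^2) * (a*(g0+1)^2 - b*g0^2) = a*b*(g0 - G)^2"
      by (simp add: power2_eq_square algebra_simps)
    moreover have "0 \<le> a*b*(g0 - G)^2" using assms by simp
    ultimately show "(a*(G+1)^2 - b*G^2) * (a*(g0+1)^2 - b*g0^2) \<le> (a*(G+1)*(g0+1) - b*G*g0)^2" by linarith
  qed
  also have "\<dots> = a*(G+1)*(g0+1) - b*G*g0" using B by simp
  finally show ?thesis .
qed

lemma EA_bound:
  fixes a b Pr k m :: real
  assumes b0: "0 \<le> b" and ba1: "b \<le> a - 1" and a1: "1 \<le> a" and Pr: "0 < Pr" and k: "0 < k" and m: "0 < m"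
  defines "h \<equiv> \<lambda>G. sqrt (a*(G+1)^2 - b*G^2) - (G+1)"
  shows "ennreal (exp (- h (Pr/m) / k))
     \<le> (\<integral>\<^sup>+x. ennreal (exponential_density m x * exp (- h (Pr*x) / k)) \<partial>lborel)"
proof -
  have ba: "b \<le> a" using ba1 by simp
  define g0 where "g0 = Pr/m"
  have g0: "0 \<le> g0" using Pr m by (simp add: g0_def)
  define Q0 where "Q0 = a*(g0+1)^2 - b*g0^2"
  have "b*g0^2 \<le> a*g0^2" using ba by (simp add: mult_right_mono)
  moreover have "a*g0^2 + a \<le> a*(g0+1)^2" using a1 g0 by (simp add: power2_eq_square algebra_simps)
  ultimately have Q0: "0 < Q0" unfolding Q0_def using a1 by linarith
  define S0 where "S0 = sqrt Q0"
  have S0: "0 < S0" using Q0 by (simp add: S0_def)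
  define h0 where "h0 = h g0"
  have h0: "h0 = S0 - (g0+1)" by (simp add: h0_def h_def S0_def Q0_def)
  define e0 where "e0 = exp (- h0 / k)"
  have e0: "0 < e0" by (simp add: e0_def)
  define L where "L = (\<lambda>x. e0*(1 - ((a*(Pr*x+1)*(g0+1) - b*(Pr*x)*g0)/S0 - (Pr*x+1) - h0)/k))"
  have pw: "L x \<le> exp (- h (Pr*x) / k)" if x: "0 \<le> x" for x
  proof -
    have G: "0 \<le> Pr*x" using x Pr by simp
    have t: "sqrt (a*(Pr*x+1)^2 - b*(Pr*x)^2) * S0 \<le> a*(Pr*x+1)*(g0+1) - b*(Pr*x)*g0"
      using tangent[OF b0 ba _ G g0] a1 by (simp add: S0_def Q0_def)
    have t2: "sqrt (a*(Pr*x+1)^2 - b*(Pr*x)^2) \<le> (a*(Pr*x+1)*(g0+1) - b*(Pr*x)*g0) / S0"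
      using t S0 by (simp add: pos_le_divide_eq)
    have "exp (- h (Pr*x) / k) = e0 * exp (- (h (Pr*x) - h0) / k)"
      by (simp add: e0_def mult_exp_exp diff_divide_distrib)
    also have "\<dots> \<ge> e0 * (1 + (- (h (Pr*x) - h0) / k))"
      using e0 by (intro mult_left_mono exp_ge_add_one_self) auto
    finally have 1: "e0 * (1 - (h (Pr*x) - h0) / k) \<le> exp (- h (Pr*x) / k)" by (simp add: diff_divide_distrib algebra_simps)
    have "(h (Pr*x) - h0) / k \<le> ((a*(Pr*x+1)*(g0+1) - b*(Pr*x)*g0)/S0 - (Pr*x+1) - h0)/k"
      using t2 k by (intro divide_right_mono) (auto simp: h_def)
    then have "L x \<le> e0 * (1 - (h (Pr*x) - h0) / k)"
      unfolding L_def using e0 by (intro mult_left_mono) auto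
    with 1 show ?thesis by linarith
  qed
  have aff: "L x = L 0 + (L 1 - L 0) * x" for x
    unfolding L_def using S0 k by (simp add: field_simps)
  have Lg: "L (1/m) = e0"
  proof -
    have "Pr * (1/m) = g0" by (simp add: g0_def)
    moreover have "(a*(g0+1)*(g0+1) - b*g0*g0)/S0 = S0"
      using S0 Q0 by (simp add: S0_def Q0_def power2_eq_square field_simps)
    ultimately show ?thesis by (simp add: L_def h0)
  qed
  have hb: "has_bochner_integral lborel (\<lambda>x. exponential_density m x * L x) (L 0 * 1 + (L 1 - L 0) * (1/m))"
  proof -
    have "has_bochner_integral lborel (\<lambda>x. L 0 * exponential_density m x + (L 1 - L 0) * (exponential_density m x * x)) (L 0 * 1 + (L 1 - L 0) * (1/m))"
      using ed_hb0[OF m] ed_hb1[OF m] by (intro has_bochner_integral_add has_bochner_integral_mult_right) auto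
    then show ?thesis
    proof (rule has_bochner_integral_cong[THEN iffD1, rotated -1])
      fix x :: real show "L 0 * exponential_density m x + (L 1 - L 0) * (exponential_density m x * x) = exponential_density m x * L x"
        by (subst (3) aff) (simp add: algebra_simps)
    qed simp_all
  qed
  have val: "L 0 * 1 + (L 1 - L 0) * (1/m) = e0" using aff[of "1/m"] Lg by simp
  have meas: "(\<lambda>x. exponential_density m x * exp (- h (Pr*x) / k)) \<in> borel_measurable lborel"
    unfolding h_def by measurable
  have int: "integrable lborel (\<lambda>x. exponential_density m x * exp (- h (Pr*x) / k))"
  proof (rule Bochner_Integration.integrable_bound[OF integrable.intros[OF ed_hb0[OF m]] meas])
    have "exp (- h (Pr*x) / k) \<le> 1" if "0 \<le> x" for x
    proof -
      have "0 \<le> h (Pr*x)"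
      proof -
        have "(Pr*x+1)^2 \<le> a*(Pr*x+1)^2 - b*(Pr*x)^2"
        proof -
          have "b*(Pr*x)^2 \<le> (a-1)*(Pr*x)^2" using ba1 by (simp add: mult_right_mono)
          also have "\<dots> \<le> (a-1)*(Pr*x+1)^2" using a1 that Pr
            by (intro mult_left_mono power_mono) auto
          finally show ?thesis by (simp add: algebra_simps)
        qed
        then have "sqrt ((Pr*x+1)^2) \<le> sqrt (a*(Pr*x+1)^2 - b*(Pr*x)^2)" by (rule real_sqrt_le_mono)
        then show ?thesis using that Pr by (simp add: h_def)
      qed
      then show ?thesis using k by simp
    qed
    then show "AE x in lborel. norm (exponential_density m x * exp (- h (Pr*x) / k)) \<le> norm (exponential_density m x)"
      using m by (auto simp: exponential_density_def)
  qed
  have "e0 \<le> integral\<^sup>L lborel (\<lambda>x. exponential_density m x * exp (- h (Pr*x) / k))"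
  proof -
    have "e0 = integral\<^sup>L lborel (\<lambda>x. exponential_density m x * L x)"
      using has_bochner_integral_integral_eq[OF hb] val by simp
    also have "\<dots> \<le> integral\<^sup>L lborel (\<lambda>x. exponential_density m x * exp (- h (Pr*x) / k))"
      using integrable.intros[OF hb] int
    proof (rule integral_mono)
      fix x :: real
      show "exponential_density m x * L x \<le> exponential_density m x * exp (- h (Pr*x) / k)"
      proof (cases "x < 0")
        case False
        then show ?thesis using pw[of x] m by (intro mult_left_mono) (auto simp: exponential_density_nonneg)
      qed (simp add: exponential_density_def)
    qed
    finally show ?thesis .
  qed
  moreover have "(\<integral>\<^sup>+x. ennreal (exponential_density m x * exp (- h (Pr*x) / k)) \<partial>lborel)
      = ennreal (integral\<^sup>L lborel (\<lambda>x. exponential_density m x * exp (- h (Pr*x) / k)))"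
    using int m by (intro nn_integral_eq_integral) (auto simp: exponential_density_nonneg)
  ultimately show ?thesis by (simp add: e0_def h0_def g0_def ennreal_leI)
qed


lemma h_nonneg:
  fixes a b G :: real
  assumes "0 \<le> b" "b \<le> a - 1" "1 \<le> a" "0 \<le> G"
  shows "G + 1 \<le> sqrt (a*(G+1)^2 - b*G^2)"
proof -
  have "b*G^2 \<le> (a-1)*G^2" using assms by (simp add: mult_right_mono)
  also have "\<dots> \<le> (a-1)*(G+1)^2" using assms by (intro mult_left_mono power_mono) auto
  finally have "(G+1)^2 \<le> a*(G+1)^2 - b*G^2" by (simp add: algebra_simps)
  then have "sqrt ((G+1)^2) \<le> sqrt (a*(G+1)^2 - b*G^2)" by (rule real_sqrt_le_mono)
  then show ?thesis using assms by simp
qed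

lemma Rsr_ge:
  fixes Ps Pr Cx r g y :: real
  assumes Ps: "0 < Ps" and Pr: "0 < Pr" and C0: "0 \<le> Cx" and C1: "Cx < 1" and r: "0 < r" and g: "0 \<le> g"
    and y: "(sqrt (2 powr (2*r) * (Pr*g+1)^2 - ((2 powr (2*r) - 1) * Cx^2) * (Pr*g)^2) - (Pr*g+1)) / Ps < y"
  shows "r \<le> R_sr Ps Pr Cx y g"
proof -
  define a where "a = 2 powr (2*r)"
  have a1: "1 < a" unfolding a_def using r by simp
  define G where "G = Pr*g"
  have G: "0 \<le> G" using Pr g by (simp add: G_def)
  define Q where "Q = a*(G+1)^2 - ((a-1)*Cx^2)*G^2"
  have D: "0 < (G+1)^2 - (G*Cx)^2"
  proof -
    have "G*Cx \<le> G" using G C1 by (simp add: mult_left_le)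
    then have "(G*Cx)^2 < (G+1)^2" using G C0 by (intro power_strict_mono) auto
    then show ?thesis by simp
  qed
  have sQ: "sqrt Q < Ps*y + (G+1)"
    using y Ps unfolding Q_def a_def G_def by (simp add: pos_divide_less_eq algebra_simps)
  have Q0: "0 \<le> Q"
  proof -
    have "(a-1)*Cx^2 \<le> a - 1" using a1 C0 C1 by (simp add: mult_left_le power_le_one)
    then show ?thesis using h_nonneg[of "(a-1)*Cx^2" a G] G a1 C0 unfolding Q_def
      by (smt (verit) real_sqrt_le_0_iff zero_le_mult_iff zero_le_power2)
  qed
  have "Q < (Ps*y + (G+1))^2"
  proof -
    have "sqrt Q ^2 < (Ps*y + (G+1))^2" using sQ Q0 by (intro power_strict_mono) auto
    then show ?thesis using Q0 by simp
  qed
  then have N: "a * ((G+1)^2 - (G*Cx)^2) < (Ps*y + G + 1)^2 - (G*Cx)^2"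
    unfolding Q_def by (simp add: algebra_simps power2_eq_square)
  then have "a < ((Ps*y + G + 1)^2 - (G*Cx)^2) / ((G+1)^2 - (G*Cx)^2)"
    using D by (simp add: pos_less_divide_eq)
  then have "log 2 a \<le> log 2 (((Ps*y + G + 1)^2 - (G*Cx)^2) / ((G+1)^2 - (G*Cx)^2))"
    using a1 by (subst log_le_cancel_iff) auto
  moreover have "log 2 a = 2*r" by (simp add: a_def)
  ultimately show ?thesis unfolding R_sr_def G_def by (simp add: algebra_simps)
qed

lemma Rrd_ge:
  fixes Ps Pr Cx r z x :: real
  assumes Ps: "0 < Ps" and Pr: "0 < Pr" and C0: "0 \<le> Cx" and C1: "Cx < 1" and r: "0 < r" and z: "0 \<le> z"
    and x: "Psi r Cx / (1 - Cx^2) * (Ps * z + 1) / Pr < x"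
  shows "r \<le> R_rd Ps Pr Cx x z"
proof -
  define a where "a = 2 powr (2*r)"
  have a1: "1 < a" unfolding a_def using r by simp
  define c where "c = 1 - Cx^2"
  have c: "0 < c" "c \<le> 1" using C0 C1 by (auto simp: c_def abs_square_less_1)
  define sq where "sq = sqrt (1 + (a - 1) * c)"
  have sq: "sq^2 = 1 + (a-1)*c" using a1 c by (simp add: sq_def)
  have sq1: "1 \<le> sq" using a1 c by (simp add: sq_def)
  have Psi: "Psi r Cx = sq - 1" by (simp add: Psi_def sq_def a_def c_def)
  define A where "A = Ps*z + 1"
  have A: "1 \<le> A" using Ps z by (simp add: A_def)
  define X where "X = Pr * x"
  have "(sq - 1) / c * A / Pr < x" using x unfolding A_def Psi c_def .
  then have "(sq - 1) / c * A < x * Pr" using Pr by (simp only: pos_divide_less_eq)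
  then have "(sq - 1) / c * A < X" by (simp add: X_def mult.commute)
  then have "(sq - 1) * A < c * X" using c by (simp add: field_simps)
  then have u: "sq * A \<le> c*X + A" by (simp add: algebra_simps)
  have "(sq*A)^2 \<le> (c*X + A)^2" using u sq1 A by (intro power_mono) auto
  then have "(1 + (a-1)*c) * A^2 \<le> (c*X + A)^2" using sq by (simp add: power_mult_distrib)
  then have "c * (a * A^2) \<le> c * ((X + A)^2 - (X*Cx)^2)"
    unfolding c_def by (simp add: algebra_simps power2_eq_square)
  then have "a * A^2 \<le> (X + A)^2 - (X*Cx)^2" using c by simp
  then have "a \<le> ((X + A)^2 - (X*Cx)^2) / A^2" using A by (simp add: pos_le_divide_eq)
  then have "log 2 a \<le> log 2 (((X + A)^2 - (X*Cx)^2) / A^2)"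
    using a1 by (subst log_le_cancel_iff) auto
  moreover have "log 2 a = 2*r" by (simp add: a_def)
  ultimately show ?thesis unfolding R_rd_def X_def A_def by (simp add: algebra_simps)
qed


lemma psi_alpha:
  fixes g0 r Cx :: real
  assumes g0: "0 \<le> g0"
  shows "(g0+1) * Psi r (g0/(g0+1) * Cx)
       = sqrt (2 powr (2*r) * (g0+1)^2 - ((2 powr (2*r) - 1) * Cx^2) * g0^2) - (g0+1)"
proof -
  define a where "a = 2 powr (2*r)"
  have p: "0 < g0 + 1" using g0 by simp
  have "(g0+1) * sqrt (1 + (a-1)*(1 - (g0/(g0+1)*Cx)^2)) = sqrt ((g0+1)^2 * (1 + (a-1)*(1 - (g0/(g0+1)*Cx)^2)))"
    using p by (simp add: real_sqrt_mult)
  also have "(g0+1)^2 * (1 + (a-1)*(1 - (g0/(g0+1)*Cx)^2)) = a * (g0+1)^2 - ((a - 1) * Cx^2) * g0^2"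
  proof -
    have e1: "(g0/(g0+1)*Cx)^2 = g0^2*Cx^2/(g0+1)^2" by (simp add: power_mult_distrib power_divide)
    have gen: "\<And>t::real. (g0+1)^2 * (1 + (a-1)*(1 - t)) = (g0+1)^2 + (a-1)*((g0+1)^2 - (g0+1)^2 * t)"
      by (simp add: algebra_simps)
    have e2: "(g0+1)^2 * (g0^2*Cx^2/(g0+1)^2) = g0^2*Cx^2" using p by simp
    have "(g0+1)^2 * (1 + (a-1)*(1 - g0^2*Cx^2/(g0+1)^2)) = (g0+1)^2 + (a-1)*((g0+1)^2 - (g0+1)^2 * (g0^2*Cx^2/(g0+1)^2))"
      by (rule gen)
    also have "\<dots> = a * (g0+1)^2 - ((a - 1) * Cx^2) * g0^2" unfolding e2 by (simp add: algebra_simps)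
    finally show ?thesis unfolding e1 .
  qed
  finally show ?thesis unfolding Psi_def a_def[symmetric] by (simp add: algebra_simps)
qed

theorem theorem4:
  fixes M :: "'a measure"
    and gsr grr grd gsd :: "'a \<Rightarrow> real"
    and Ps Pr Cx r \<pi>sr \<pi>rr \<pi>rd \<pi>sd :: real
  assumes "prob_space M"
    and "prob_space.indep_vars M (\<lambda>_. borel) (\<lambda>i. [gsr, grr, grd, gsd] ! i) {0..<4}"
    and "distributed M lborel gsr (exponential_density (1 / \<pi>sr))"
    and "distributed M lborel grr (exponential_density (1 / \<pi>rr))"
    and "distributed M lborel grd (exponential_density (1 / \<pi>rd))"
    and "distributed M lborel gsd (exponential_density (1 / \<pi>sd))"
    and "\<pi>sr > 0" "\<pi>rr > 0" "\<pi>rd > 0" "\<pi>sd > 0"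
    and "Ps > 0" "Pr > 0" "r > 0" "0 \<le> Cx" "Cx < 1"
  shows "measure M {\<omega> \<in> space M.
            min (R_sr Ps Pr Cx (gsr \<omega>) (grr \<omega>)) (R_rd Ps Pr Cx (grd \<omega>) (gsd \<omega>)) < r}
         \<le> P_UB r Ps Pr Cx \<pi>sr \<pi>rr \<pi>rd \<pi>sd"
proof -
  interpret prob_space M by fact
  note DSR = assms(3) and DRR = assms(4) and DRD = assms(5) and DSD = assms(6)
  note psr = assms(7) and prr = assms(8) and prd = assms(9) and psd = assms(10)
  note Ps = assms(11) and Pr = assms(12) and r = assms(13) and C0 = assms(14) and C1 = assms(15)
  define X where "X = (\<lambda>i. [gsr, grr, grd, gsd] ! i)"
  have ind: "indep_vars (\<lambda>_. borel) X {0..<4}" using assms(2) by (simp add: X_def)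
  have X0: "X 0 = gsr" and X1: "X 1 = grr" and X2: "X 2 = grd" and X3: "X 3 = gsd"
    by (simp_all add: X_def)
  define a where "a = 2 powr (2*r)"
  have a1: "1 < a" unfolding a_def using r by simp
  define b where "b = (a - 1) * Cx^2"
  have b0: "0 \<le> b" using a1 by (simp add: b_def)
  have ba: "b \<le> a - 1" using a1 C0 C1 by (simp add: b_def mult_left_le power_le_one)
  define hA where "hA = (\<lambda>G::real. sqrt (a*(G+1)^2 - b*G^2) - (G+1))"
  define phiA where "phiA = (\<lambda>x. hA (Pr*x) / Ps)"
  define tstar where "tstar = Psi r Cx / (1 - Cx^2)"
  have c: "0 < 1 - Cx^2" using C0 C1 by (simp add: abs_square_less_1)
  have Psi0: "0 \<le> Psi r Cx"
  proof -
    have "0 \<le> (2 powr (2*r) - 1) * (1 - Cx^2)" using a1 c by (simp add: a_def)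
    then show ?thesis by (simp add: Psi_def)
  qed
  have ts: "0 \<le> tstar" using Psi0 c by (simp add: tstar_def)
  define phiB where "phiB = (\<lambda>x. tstar * (Ps*x + 1) / Pr)"
  define EA where "EA = {\<omega>\<in>space M. 0 \<le> grr \<omega> \<and> phiA (grr \<omega>) < gsr \<omega>}"
  define EB where "EB = {\<omega>\<in>space M. 0 \<le> gsd \<omega> \<and> phiB (gsd \<omega>) < grd \<omega>}"
  have indA: "indep_var lborel grr lborel gsr"
    using pair_indep[OF ind, of 1 0] unfolding X_def by simp
  have indB: "indep_var lborel gsd lborel grd"
    using pair_indep[OF ind, of 3 2] unfolding X_def by simp
  have hA0: "0 \<le> hA G" if "0 \<le> G" for G
    using h_nonneg[OF b0 ba _ that] a1 by (simp add: hA_def)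
  have mA: "phiA \<in> borel_measurable borel" unfolding phiA_def hA_def by measurable
  have mB: "phiB \<in> borel_measurable borel" unfolding phiB_def by measurable
  have eA: "emeasure M EA = (\<integral>\<^sup>+x. ennreal (exponential_density (1/\<pi>rr) x * exp (- phiA x * (1/\<pi>sr))) \<partial>lborel)"
    unfolding EA_def
    by (rule prob_gt_fun[OF indA DRR DSR]) (use psr prr Ps Pr mA hA0 in \<open>auto simp: phiA_def\<close>)
  also have "\<dots> = (\<integral>\<^sup>+x. ennreal (exponential_density (1/\<pi>rr) x * exp (- hA (Pr*x) / (Ps*\<pi>sr))) \<partial>lborel)"
    by (simp add: phiA_def)
  finally have eA: "ennreal (exp (- hA (Pr/(1/\<pi>rr)) / (Ps*\<pi>sr))) \<le> emeasure M EA"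
    using EA_bound[OF b0 ba _ Pr _, of "Ps*\<pi>sr" "1/\<pi>rr"] a1 Ps psr prr by (simp add: hA_def)
  define T where "T = tstar / (Pr * \<pi>rd)"
  have T0: "0 \<le> T" using ts Pr prd by (simp add: T_def)
  have "emeasure M EB = (\<integral>\<^sup>+x. ennreal (exponential_density (1/\<pi>sd) x * exp (- phiB x * (1/\<pi>rd))) \<partial>lborel)"
    unfolding EB_def
    by (rule prob_gt_fun[OF indB DSD DRD]) (use prd psd Ps Pr mB ts in \<open>auto simp: phiB_def\<close>)
  also have "\<dots> = (\<integral>\<^sup>+x. ennreal (exponential_density (1/\<pi>sd) x * exp (- (T * (Ps * x + 1)))) \<partial>lborel)"
    by (simp add: phiB_def T_def)
  also have "\<dots> = ennreal (exp (- T) * ((1/\<pi>sd) / (1/\<pi>sd + T * Ps)))"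
    using laplace_exp[of "1/\<pi>sd" T Ps] psd T0 Ps by simp
  finally have eB: "emeasure M EB = ennreal (exp (- T) * ((1/\<pi>sd) / (1/\<pi>sd + T * Ps)))" .
  define pB where "pB = exp (- T) * ((1/\<pi>sd) / (1/\<pi>sd + T * Ps))"
  have pB0: "0 \<le> pB" using psd T0 Ps by (simp add: pB_def)
  have pEB: "prob EB = pB" using eB pB0 by (simp add: emeasure_eq_measure pB_def)
  define eA0 where "eA0 = exp (- hA (Pr/(1/\<pi>rr)) / (Ps*\<pi>sr))"
  have pEA: "eA0 \<le> prob EA" using eA by (simp add: emeasure_eq_measure eA0_def)
  have [measurable]: "grr \<in> borel_measurable M" "gsr \<in> borel_measurable M" "grd \<in> borel_measurable M" "gsd \<in> borel_measurable M"
    using distributed_measurable[OF DRR] distributed_measurable[OF DSR] distributed_measurable[OF DRD] distributed_measurable[OF DSD]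
    by (simp_all add: measurable_lborel2)
  have EAs: "EA \<in> events" unfolding EA_def using mA by measurable
  have EBs: "EB \<in> events" unfolding EB_def using mB by measurable
  have indG: "indep_var (PiM {0,1} (\<lambda>_. borel)) (\<lambda>\<omega>. restrict (\<lambda>i. X i \<omega>) {0,1})
                   (PiM {2,3} (\<lambda>_. borel)) (\<lambda>\<omega>. restrict (\<lambda>i. X i \<omega>) {2,3})"
    by (rule group_indep[OF ind]) auto
  define SA where "SA = {f \<in> space (PiM {0::nat,1} (\<lambda>_. borel :: real measure)). 0 \<le> f 1 \<and> phiA (f 1) < f 0}"
  define SB where "SB = {f \<in> space (PiM {2::nat,3} (\<lambda>_. borel :: real measure)). 0 \<le> f 3 \<and> phiB (f 3) < f 2}"
  have [measurable]: "(\<lambda>f. f 1) \<in> borel_measurable (PiM {0::nat,1} (\<lambda>_. borel :: real measure))"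
    by (rule measurable_component_singleton) simp
  have [measurable]: "(\<lambda>f. f 0) \<in> borel_measurable (PiM {0::nat,1} (\<lambda>_. borel :: real measure))"
    by (rule measurable_component_singleton) simp
  have [measurable]: "(\<lambda>f. f 3) \<in> borel_measurable (PiM {2::nat,3} (\<lambda>_. borel :: real measure))"
    by (rule measurable_component_singleton) simp
  have [measurable]: "(\<lambda>f. f 2) \<in> borel_measurable (PiM {2::nat,3} (\<lambda>_. borel :: real measure))"
    by (rule measurable_component_singleton) simp
  note mA[measurable] mB[measurable]
  have SA: "SA \<in> sets (PiM {0,1} (\<lambda>_. borel))" unfolding SA_def by measurable
  have SB: "SB \<in> sets (PiM {2,3} (\<lambda>_. borel))" unfolding SB_def by measurable
  have "EA \<inter> EB = (\<lambda>\<omega>. (restrict (\<lambda>i. X i \<omega>) {0,1}, restrict (\<lambda>i. X i \<omega>) {2,3})) -` (SA \<times> SB) \<inter> space M"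
    unfolding EA_def EB_def SA_def SB_def X_def by (auto simp: space_PiM restrict_PiE_iff)
  moreover have "EA = (\<lambda>\<omega>. restrict (\<lambda>i. X i \<omega>) {0,1}) -` SA \<inter> space M"
    unfolding EA_def SA_def X_def by (auto simp: space_PiM restrict_PiE_iff)
  moreover have "EB = (\<lambda>\<omega>. restrict (\<lambda>i. X i \<omega>) {2,3}) -` SB \<inter> space M"
    unfolding EB_def SB_def X_def by (auto simp: space_PiM restrict_PiE_iff)
  ultimately have pAB: "prob (EA \<inter> EB) = prob EA * prob EB"
    using indep_varD[OF indG SA SB] by simp
  have sub: "{\<omega> \<in> space M. min (R_sr Ps Pr Cx (gsr \<omega>) (grr \<omega>)) (R_rd Ps Pr Cx (grd \<omega>) (gsd \<omega>)) < r}
      \<subseteq> space M - (EA \<inter> EB)"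
  proof safe
    fix \<omega> assume "\<omega> \<in> space M" and lt: "min (R_sr Ps Pr Cx (gsr \<omega>) (grr \<omega>)) (R_rd Ps Pr Cx (grd \<omega>) (gsd \<omega>)) < r"
      and A: "\<omega> \<in> EA" and B: "\<omega> \<in> EB"
    have "r \<le> R_sr Ps Pr Cx (gsr \<omega>) (grr \<omega>)"
      using A by (intro Rsr_ge[OF Ps Pr C0 C1 r]) (auto simp: EA_def phiA_def hA_def a_def b_def)
    moreover have "r \<le> R_rd Ps Pr Cx (grd \<omega>) (gsd \<omega>)"
      using B by (intro Rrd_ge[OF Ps Pr C0 C1 r]) (auto simp: EB_def phiB_def tstar_def)
    ultimately show False using lt by simp
  qed
  have "measure M {\<omega> \<in> space M. min (R_sr Ps Pr Cx (gsr \<omega>) (grr \<omega>)) (R_rd Ps Pr Cx (grd \<omega>) (gsd \<omega>)) < r}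
      \<le> prob (space M - (EA \<inter> EB))"
    using sub EAs EBs by (intro finite_measure_mono) auto
  also have "\<dots> = 1 - prob EA * prob EB"
    using EAs EBs pAB by (simp add: prob_compl)
  also have "\<dots> \<le> 1 - eA0 * pB"
    using pEA pEB pB0 by (simp add: mult_right_mono)
  also have "eA0 * pB = exp (- (T + (Pr * \<pi>rr + 1) / (Ps * \<pi>sr) * Psi r (Pr * \<pi>rr / (Pr * \<pi>rr + 1) * Cx)))
                  / (Ps * \<pi>sd * T + 1)"
  proof -
    define Y where "Y = (Pr * \<pi>rr + 1) / (Ps * \<pi>sr) * Psi r (Pr * \<pi>rr / (Pr * \<pi>rr + 1) * Cx)"
    have g0: "0 \<le> Pr * \<pi>rr" using Pr prr by simp
    have "Y = hA (Pr * \<pi>rr) / (Ps * \<pi>sr)"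
      unfolding Y_def using psi_alpha[OF g0, of r Cx] by (simp add: hA_def a_def b_def)
    then have e1: "eA0 = exp (- Y)" by (simp add: eA0_def)
    have e2: "(1/\<pi>sd) / (1/\<pi>sd + T * Ps) = 1 / (Ps * \<pi>sd * T + 1)"
      using psd T0 Ps by (simp add: field_simps)
    have e3: "exp (- (T + Y)) = exp (- Y) * exp (- T)" by (simp add: mult_exp_exp)
    show ?thesis unfolding Y_def[symmetric] e3 e1 pB_def e2 by simp
  qed
  also have "1 - exp (- (T + (Pr * \<pi>rr + 1) / (Ps * \<pi>sr) * Psi r (Pr * \<pi>rr / (Pr * \<pi>rr + 1) * Cx)))
                  / (Ps * \<pi>sd * T + 1) = P_UB r Ps Pr Cx \<pi>sr \<pi>rr \<pi>rd \<pi>sd"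
  proof -
    have "T = Psi r Cx / (Pr * \<pi>rd * (1 - Cx^2))" by (simp add: T_def tstar_def mult.commute)
    then show ?thesis by (simp add: P_UB_def Let_def)
  qed
  finally show ?thesis .
qed

end
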